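(* Let $R$ be a proper normed division ring and let $M$ be a Polish $R$-module with $\dim_R(M)$ uncountable. Then there is a nonempty perfect subset of $M$ which is linearly independent over $R$.
   Context: A norm on a ring $R$ is a function $|\cdot|\colon R\to[0,\infty)$ such that $(a,b)\mapsto|a-b|$ is a metric and $|rs|\le|r||s|$; it is proper if every closed ball is compact; a proper normed ring is a ring with a proper norm, topologized by the metric. A division ring is a ring in which every nonzero element has a two-sided inverse. A Polish $R$-module is a topological left $R$-module whose topology is Polish. *)

theory Defs
  imports "HOL-Analysis.Analysis"
begin

definition ring_norm :: "('r::ring \<Rightarrow> real) \<Rightarrow> bool" where
  "ring_norm nr \<longleftrightarrow> (\<forall>a. 0 \<le> nr a) \<and> Metric_space UNIV (\<lambda>a b. nr (a - b))
     \<and> (\<forall>r s. nr (r * s) \<le> nr r * nr s)"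

definition norm_topology :: "('r::ring \<Rightarrow> real) \<Rightarrow> 'r topology" where
  "norm_topology nr = Metric_space.mtopology UNIV (\<lambda>a b. nr (a - b))"

definition proper_ring_norm :: "('r::ring \<Rightarrow> real) \<Rightarrow> bool" where
  "proper_ring_norm nr \<longleftrightarrow> ring_norm nr \<and>
     (\<forall>a e. compactin (norm_topology nr) (Metric_space.mcball UNIV (\<lambda>a b. nr (a - b)) a e))"

definition left_module :: "('r::ring_1 \<Rightarrow> 'm::ab_group_add \<Rightarrow> 'm) \<Rightarrow> bool" where
  "left_module smul \<longleftrightarrow>
     (\<forall>r x y. smul r (x + y) = smul r x + smul r y) \<and>
     (\<forall>r s x. smul (r + s) x = smul r x + smul s x) \<and>
     (\<forall>r s x. smul (r * s) x = smul r (smul s x)) \<and>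
     (\<forall>x. smul 1 x = x)"

definition topological_left_module ::
  "('r::ring_1 \<Rightarrow> real) \<Rightarrow> ('r \<Rightarrow> 'm::ab_group_add \<Rightarrow> 'm) \<Rightarrow> 'm topology \<Rightarrow> bool" where
  "topological_left_module nr smul T \<longleftrightarrow> left_module smul \<and> topspace T = UNIV \<and>
     continuous_map (prod_topology T T) T (\<lambda>(x, y). x + y) \<and>
     continuous_map (prod_topology (norm_topology nr) T) T (\<lambda>(r, x). smul r x)"

definition Polish_space :: "'a topology \<Rightarrow> bool" where
  "Polish_space T \<longleftrightarrow> completely_metrizable_space T \<and> separable_space T"

definition lin_indep :: "('r::ring_1 \<Rightarrow> 'm::ab_group_add \<Rightarrow> 'm) \<Rightarrow> 'm set \<Rightarrow> bool" where
  "lin_indep smul A \<longleftrightarrow> (\<forall>S c. finite S \<and> S \<subseteq> A \<and> (\<Sum>x\<in>S. smul (c x) x) = 0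
      \<longrightarrow> (\<forall>x\<in>S. c x = 0))"

definition lin_span :: "('r::ring_1 \<Rightarrow> 'm::ab_group_add \<Rightarrow> 'm) \<Rightarrow> 'm set \<Rightarrow> 'm set" where
  "lin_span smul A = {y. \<exists>S c. finite S \<and> S \<subseteq> A \<and> y = (\<Sum>x\<in>S. smul (c x) x)}"

definition is_basis :: "('r::ring_1 \<Rightarrow> 'm::ab_group_add \<Rightarrow> 'm) \<Rightarrow> 'm set \<Rightarrow> bool" where
  "is_basis smul B \<longleftrightarrow> lin_indep smul B \<and> lin_span smul B = UNIV"

text \<open>dim_R(M) is the cardinality of a basis (well defined over a division ring);
  "dim uncountable" means M has an uncountable basis.\<close>
definition uncountable_dim :: "('r::ring_1 \<Rightarrow> 'm::ab_group_add \<Rightarrow> 'm) \<Rightarrow> bool" where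
  "uncountable_dim smul \<longleftrightarrow> (\<exists>B. is_basis smul B \<and> uncountable B)"

definition perfect_set :: "'a topology \<Rightarrow> 'a set \<Rightarrow> bool" where
  "perfect_set T P \<longleftrightarrow> closedin T P \<and> T derived_set_of P = P"

end

theory Submission
  imports Defs
begin


context
  fixes smul :: "'r::division_ring \<Rightarrow> 'm::ab_group_add \<Rightarrow> 'm"
  assumes lm: "left_module smul"
begin

lemma sm_add: "smul r (x + y) = smul r x + smul r y" using lm by (simp add: left_module_def)
lemma sm_radd: "smul (r + s) x = smul r x + smul s x" using lm by (simp add: left_module_def)
lemma sm_mult: "smul (r * s) x = smul r (smul s x)" using lm by (simp add: left_module_def)
lemma sm_one: "smul 1 x = x" using lm by (simp add: left_module_def)

lemma sm_zero_right: "smul r 0 = 0"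
proof -
  have "smul r 0 = smul r 0 + smul r 0" using sm_add[of r 0 0] by simp
  then show ?thesis by simp
qed

lemma sm_zero_left: "smul 0 x = 0"
proof -
  have "smul 0 x = smul 0 x + smul 0 x" using sm_radd[of 0 0 x] by simp
  then show ?thesis by simp
qed

lemma sm_neg_left: "smul (- r) x = - smul r x"
proof -
  have "smul r x + smul (- r) x = 0" using sm_radd[of r "-r" x] sm_zero_left by simp
  then show ?thesis by (simp add: add_eq_0_iff)
qed

lemma sm_sum_right: "smul r (\<Sum>i\<in>S. f i) = (\<Sum>i\<in>S. smul r (f i))"
  by (induction S rule: infinite_finite_induct) (auto simp: sm_zero_right sm_add)

lemma sm_sum_left: "smul (\<Sum>i\<in>S. f i) x = (\<Sum>i\<in>S. smul (f i) x)"
  by (induction S rule: infinite_finite_induct) (auto simp: sm_zero_left sm_radd)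

lemma spanI: "finite S \<Longrightarrow> S \<subseteq> A \<Longrightarrow> y = (\<Sum>x\<in>S. smul (c x) x) \<Longrightarrow> y \<in> lin_span smul A"
  unfolding lin_span_def by (rule CollectI, rule exI[of _ S], rule exI[of _ c]) simp

lemma spanE:
  assumes "y \<in> lin_span smul A"
  obtains S c where "finite S" "S \<subseteq> A" "y = (\<Sum>x\<in>S. smul (c x) x)"
  using assms unfolding lin_span_def by (auto simp del: )

lemma span_zero: "0 \<in> lin_span smul A"
  unfolding lin_span_def by (rule CollectI, rule exI[of _ "{}"]) auto

lemma span_base: "x \<in> A \<Longrightarrow> x \<in> lin_span smul A"
  unfolding lin_span_def
  by (rule CollectI, rule exI[of _ "{x}"], rule exI[of _ "\<lambda>_. 1"]) (auto simp: sm_one)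

lemma span_mono: "A \<subseteq> B \<Longrightarrow> lin_span smul A \<subseteq> lin_span smul B"
  unfolding lin_span_def by blast

lemma span_add:
  assumes "a \<in> lin_span smul A" "b \<in> lin_span smul A"
  shows "a + b \<in> lin_span smul A"
proof -
  obtain S1 c1 where 1: "finite S1" "S1 \<subseteq> A" "a = (\<Sum>x\<in>S1. smul (c1 x) x)"
    using assms(1) unfolding lin_span_def by blast
  obtain S2 c2 where 2: "finite S2" "S2 \<subseteq> A" "b = (\<Sum>x\<in>S2. smul (c2 x) x)"
    using assms(2) unfolding lin_span_def by blast
  define c where "c x = (if x \<in> S1 then c1 x else 0) + (if x \<in> S2 then c2 x else 0)" for x
  have fin: "finite (S1 \<union> S2)" using 1 2 by auto
  have "(\<Sum>x\<in>S1 \<union> S2. smul (c x) x)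
      = (\<Sum>x\<in>S1 \<union> S2. (if x \<in> S1 then smul (c1 x) x else 0)) + (\<Sum>x\<in>S1 \<union> S2. (if x \<in> S2 then smul (c2 x) x else 0))"
    unfolding c_def sm_radd sum.distrib[symmetric]
    by (rule sum.cong) (auto simp: sm_zero_left)
  also have "\<dots> = (\<Sum>x\<in>(S1 \<union> S2) \<inter> S1. smul (c1 x) x) + (\<Sum>x\<in>(S1 \<union> S2) \<inter> S2. smul (c2 x) x)"
    by (simp only: sum.inter_restrict[OF fin])
  also have "\<dots> = a + b"
  proof -
    have "(S1 \<union> S2) \<inter> S1 = S1" "(S1 \<union> S2) \<inter> S2 = S2" by auto
    then show ?thesis by (simp only: 1(3) 2(3))
  qed
  finally have "a + b = (\<Sum>x\<in>S1 \<union> S2. smul (c x) x)" by simp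
  moreover have "S1 \<union> S2 \<subseteq> A" using 1 2 by auto
  ultimately show ?thesis
    using fin by (intro spanI[of "S1 \<union> S2" A _ c]) auto
qed

lemma span_smul:
  assumes "a \<in> lin_span smul A"
  shows "smul r a \<in> lin_span smul A"
proof -
  obtain S c where 1: "finite S" "S \<subseteq> A" "a = (\<Sum>x\<in>S. smul (c x) x)"
    using assms unfolding lin_span_def by blast
  have "smul r a = (\<Sum>x\<in>S. smul (r * c x) x)"
    unfolding 1 sm_sum_right sm_mult ..
  then show ?thesis using 1 by (intro spanI[of S A _ "\<lambda>x. r * c x"]) auto
qed

lemma span_sum:
  assumes "finite J" "\<forall>j\<in>J. f j \<in> lin_span smul A"
  shows "(\<Sum>j\<in>J. smul (e j) (f j)) \<in> lin_span smul A"
  using assms by (induction J rule: finite_induct) (auto intro!: span_add span_smul simp: span_zero)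

lemma span_span: "lin_span smul (lin_span smul A) \<subseteq> lin_span smul A"
proof
  fix y assume "y \<in> lin_span smul (lin_span smul A)"
  then obtain S c where 1: "finite S" "S \<subseteq> lin_span smul A" "y = (\<Sum>x\<in>S. smul (c x) x)"
    by (rule spanE)
  show "y \<in> lin_span smul A" unfolding 1(3) using span_sum[of S id A c] 1 by auto
qed

lemma span_lincomb:
  assumes "finite J"
  shows "(\<Sum>j\<in>J. smul (e j) (f j)) \<in> lin_span smul (f ` J)"
  using assms by (intro span_sum) (auto intro: span_base)

lemma countable_span_not_univ:
  assumes "uncountable_dim smul" "countable C"
  shows "lin_span smul C \<noteq> UNIV"
proof
  assume CU: "lin_span smul C = UNIV"
  obtain B where B: "is_basis smul B" "uncountable B"
    using assms(1) unfolding uncountable_dim_def by blast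
  have "\<forall>x\<in>C. \<exists>F. finite F \<and> F \<subseteq> B \<and> x \<in> lin_span smul F"
  proof
    fix x assume "x \<in> C"
    have "x \<in> lin_span smul B" using B(1) unfolding is_basis_def by auto
    then obtain S c where "finite S" "S \<subseteq> B" "x = (\<Sum>x\<in>S. smul (c x) x)"
      by (rule spanE)
    then have "x \<in> lin_span smul S" by (intro spanI[of S S x c]) auto
    then show "\<exists>F. finite F \<and> F \<subseteq> B \<and> x \<in> lin_span smul F"
      using \<open>finite S\<close> \<open>S \<subseteq> B\<close> by blast
  qed
  then obtain F where F: "\<forall>x\<in>C. finite (F x) \<and> F x \<subseteq> B \<and> x \<in> lin_span smul (F x)"
    by metis
  define W where "W = (\<Union>x\<in>C. F x)"
  have cW: "countable W" unfolding W_def using assms(2) F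
    by (intro countable_UN) (auto intro: countable_finite)
  have "C \<subseteq> lin_span smul W"
    using F span_mono[of "F _" W] unfolding W_def by blast
  then have "lin_span smul C \<subseteq> lin_span smul W"
    using span_mono span_span by blast
  then have WU: "lin_span smul W = UNIV" using CU by auto
  have "W \<subseteq> B" unfolding W_def using F by auto
  from B(2) cW have "\<not> B \<subseteq> W" using countable_subset by blast
  then obtain b where b: "b \<in> B" "b \<notin> W" by blast
  have "b \<in> lin_span smul W" using WU by auto
  then obtain S c where S: "finite S" "S \<subseteq> W" "b = (\<Sum>x\<in>S. smul (c x) x)"
    by (rule spanE)
  have bS: "b \<notin> S" using S b by auto
  define c' where "c' = c(b := -1)"
  have "(\<Sum>x\<in>insert b S. smul (c' x) x) = smul (-1) b + (\<Sum>x\<in>S. smul (c x) x)"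
  proof -
    have "(\<Sum>x\<in>insert b S. smul (c' x) x) = smul (c' b) b + (\<Sum>x\<in>S. smul (c' x) x)"
      using S(1) bS by (rule sum.insert)
    moreover have "(\<Sum>x\<in>S. smul (c' x) x) = (\<Sum>x\<in>S. smul (c x) x)"
      using bS by (intro sum.cong) (auto simp: c'_def)
    ultimately show ?thesis by (simp add: c'_def)
  qed
  also have "\<dots> = 0" using S(3) by (simp add: sm_neg_left sm_one)
  finally have "\<forall>x\<in>insert b S. c' x = 0"
    using B(1) S \<open>W \<subseteq> B\<close> b unfolding is_basis_def lin_indep_def
    by (metis (no_types, lifting) finite_insert insert_subset subset_trans)
  then show False by (simp add: c'_def)
qed

end



definition indepF :: "('r::ring_1 \<Rightarrow> 'm::ab_group_add \<Rightarrow> 'm) \<Rightarrow> nat \<Rightarrow> (nat \<Rightarrow> 'm) \<Rightarrow> bool" where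
  "indepF smul N q \<longleftrightarrow> (\<forall>c. (\<Sum>j<N. smul (c j) (q j)) = 0 \<longrightarrow> (\<forall>j<N. c j = 0))"

lemma sm_neg_right:
  fixes smul :: "'r::division_ring \<Rightarrow> 'm::ab_group_add \<Rightarrow> 'm"
  assumes lm: "left_module smul"
  shows "smul r (- x) = - smul r x"
proof -
  have "smul r x + smul r (- x) = 0" using sm_add[OF lm, of r x "-x"] sm_zero_right[OF lm] by simp
  then show ?thesis by (simp add: add_eq_0_iff)
qed

lemma indepF_Suc:
  fixes smul :: "'r::division_ring \<Rightarrow> 'm::ab_group_add \<Rightarrow> 'm"
  assumes lm: "left_module smul" and ind: "indepF smul k q"
    and nk: "q k \<notin> lin_span smul (q ` {..<k})"
  shows "indepF smul (Suc k) q"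
  unfolding indepF_def
proof (rule allI, rule impI)
  fix c assume "(\<Sum>j<Suc k. smul (c j) (q j)) = 0"
  then have s: "(\<Sum>j<k. smul (c j) (q j)) + smul (c k) (q k) = 0" by simp
  show "\<forall>j<Suc k. c j = 0"
  proof (cases "c k = 0")
    case True
    then have "(\<Sum>j<k. smul (c j) (q j)) = 0" using s sm_zero_left[OF lm] by simp
    then show ?thesis using ind True unfolding indepF_def by (auto simp: less_Suc_eq)
  next
    case False
    have e: "smul (c k) (q k) = - (\<Sum>j<k. smul (c j) (q j))" using s by (simp add: eq_neg_iff_add_eq_0 add.commute)
    have "q k = smul (inverse (c k)) (smul (c k) (q k))"
      using False by (simp add: sm_mult[OF lm, symmetric] sm_one[OF lm])
    also have "\<dots> = smul (- inverse (c k)) (\<Sum>j<k. smul (c j) (q j))"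
      unfolding e sm_neg_right[OF lm] sm_neg_left[OF lm] ..
    also have "\<dots> = (\<Sum>j<k. smul (- inverse (c k) * c j) (q j))"
      by (simp only: sm_sum_right[OF lm] sm_mult[OF lm])
    also have "\<dots> \<in> lin_span smul (q ` {..<k})"
      by (rule span_lincomb[OF lm]) simp
    finally show ?thesis using nk by simp
  qed
qed

lemma cont_sum:
  assumes add: "continuous_map (prod_topology T T) T (\<lambda>(x,y). x + y)"
    and top: "topspace T = (UNIV :: 'a::ab_group_add set)"
    and fin: "finite J" and f: "\<forall>j\<in>J. continuous_map Z T (f j)"
  shows "continuous_map Z T (\<lambda>z. \<Sum>j\<in>J. f j z)"
  using fin f
proof (induction J rule: finite_induct)
  case empty
  then show ?case by (simp add: top)
next
  case (insert x F)
  have "continuous_map Z T ((\<lambda>(x,y). x + y) \<circ> (\<lambda>z. (f x z, \<Sum>j\<in>F. f j z)))"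
    using insert by (intro continuous_map_compose[OF continuous_map_pairedI add]) auto
  then show ?case using insert by (simp add: o_def)
qed

locale pm = Metric_space "UNIV :: 'm set" d
  for d :: "'m::ab_group_add \<Rightarrow> 'm \<Rightarrow> real" +
  fixes nr :: "'r::division_ring \<Rightarrow> real" and smul :: "'r \<Rightarrow> 'm \<Rightarrow> 'm"
  assumes proper: "proper_ring_norm nr"
    and tlm: "topological_left_module nr smul mtopology"
    and compl: "mcomplete"
    and sep: "separable_space mtopology"
    and dim: "uncountable_dim smul"

sublocale pm \<subseteq> R: Metric_space "UNIV :: 'r set" "\<lambda>a b. nr (a - b)"
  using proper unfolding proper_ring_norm_def ring_norm_def by auto

context pm
begin

lemma lm: "left_module smul" using tlm unfolding topological_left_module_def by auto

lemma add_cont: "continuous_map (prod_topology mtopology mtopology) mtopology (\<lambda>(x,y). x + y)"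
  using tlm unfolding topological_left_module_def by auto

lemma smul_cont: "continuous_map (prod_topology R.mtopology mtopology) mtopology (\<lambda>(r,x). smul r x)"
  using tlm unfolding topological_left_module_def norm_topology_def by auto

lemma Rball_compact: "compactin R.mtopology (R.mcball a e)"
  using proper unfolding proper_ring_norm_def norm_topology_def by auto

lemma nr0: "nr 0 = 0" using R.mdist_zero[of 0] by simp
lemma nr_eq0: "nr a = 0 \<Longrightarrow> a = 0" using R.zero[of a 0] by simp
lemma nr_nonneg: "0 \<le> nr a" using R.nonneg[of a 0] by simp
lemma nr_neg: "nr (- a) = nr a" using R.commute[of 0 a] by simp

lemma countable_base:
  "\<exists>\<B>. countable \<B> \<and> (\<forall>V\<in>\<B>. openin mtopology V) \<and>
      (\<forall>U x. openin mtopology U \<and> x \<in> U \<longrightarrow> (\<exists>V\<in>\<B>. x \<in> V \<and> V \<subseteq> U))"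
proof -
  obtain D where D: "countable D" "mtopology closure_of D = UNIV"
    using sep unfolding separable_space_def by auto
  define \<B> where "\<B> = (\<lambda>(a,n). mball a (1 / real (Suc n))) ` (D \<times> (UNIV :: nat set))"
  have "countable \<B>" unfolding \<B>_def using D(1) by (intro countable_image countable_SIGMA) auto
  moreover have "\<forall>V\<in>\<B>. openin mtopology V" unfolding \<B>_def by auto
  moreover have "\<exists>V\<in>\<B>. x \<in> V \<and> V \<subseteq> U" if "openin mtopology U" "x \<in> U" for U x
  proof -
    have "\<exists>r>0. mball x r \<subseteq> U" using that(1)[unfolded openin_mtopology] that(2) by blast
    then obtain r where r: "r > 0" "mball x r \<subseteq> U" by blast
    obtain n0 where n0: "n0 \<noteq> 0" "inverse (real n0) < r/2"
      using real_arch_inverse[of "r/2"] r(1) by auto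
    define n where "n = n0 - 1"
    have "Suc n = n0" using n0 unfolding n_def by simp
    then have n: "1 / real (Suc n) < r / 2" using n0 by (simp add: inverse_eq_divide)
    have "x \<in> mtopology closure_of D" using D by auto
    then have "\<forall>e>0. \<exists>y\<in>D. y \<in> mball x e" unfolding metric_closure_of by blast
    then obtain y where y: "y \<in> D" "y \<in> mball x (1 / real (Suc n))"
      by (meson divide_pos_pos of_nat_0_less_iff zero_less_Suc zero_less_one)
    have dxy: "d y x < 1 / real (Suc n)" using y(2) commute[of x y] by simp
    have "x \<in> mball y (1 / real (Suc n))" using dxy by simp
    moreover have "mball y (1 / real (Suc n)) \<subseteq> U"
    proof
      fix z assume "z \<in> mball y (1 / real (Suc n))"
      then have "d y z < 1 / real (Suc n)" by simp
      then have "d x z < r" using dxy triangle[of x y z] commute[of x y] n by simp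
      then show "z \<in> U" using r by auto
    qed
    moreover have "mball y (1 / real (Suc n)) \<in> \<B>" unfolding \<B>_def using y(1)
      by (intro image_eqI[of _ _ "(y,n)"]) auto
    ultimately show ?thesis by blast
  qed
  ultimately show ?thesis by blast
qed

definition cspan :: "'m set \<Rightarrow> bool" where
  "cspan A \<longleftrightarrow> (\<exists>C. countable C \<and> A \<subseteq> lin_span smul C)"

definition X :: "'m set" where
  "X = {x. \<forall>U. openin mtopology U \<and> x \<in> U \<longrightarrow> \<not> cspan U}"

lemma cspan_lemma:
  assumes U: "openin mtopology U" and C: "countable C" and sub: "U \<inter> X \<subseteq> lin_span smul C"
  shows "cspan U"
proof -
  obtain \<B> where B: "countable \<B>" "\<forall>V\<in>\<B>. openin mtopology V"
    "\<forall>U x. openin mtopology U \<and> x \<in> U \<longrightarrow> (\<exists>V\<in>\<B>. x \<in> V \<and> V \<subseteq> U)"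
    using countable_base by blast
  define B' where "B' = {b\<in>\<B>. cspan b}"
  have "\<forall>b\<in>B'. \<exists>C. countable C \<and> b \<subseteq> lin_span smul C"
    unfolding B'_def cspan_def by blast
  then obtain Cb where Cb: "\<forall>b\<in>B'. countable (Cb b) \<and> b \<subseteq> lin_span smul (Cb b)"
    by metis
  define D where "D = C \<union> (\<Union>b\<in>B'. Cb b)"
  have cD: "countable D" unfolding D_def using C Cb B(1)
    by (auto simp: B'_def intro!: countable_UN)
  have "U \<subseteq> lin_span smul D"
  proof
    fix x assume xU: "x \<in> U"
    show "x \<in> lin_span smul D"
    proof (cases "x \<in> X")
      case True
      then have "x \<in> lin_span smul C" using sub xU by auto
      then show ?thesis using span_mono[OF lm, of C D] unfolding D_def by auto
    next
      case False
      then obtain V where V: "openin mtopology V" "x \<in> V" "cspan V" unfolding X_def by auto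
      then obtain b where b: "b \<in> \<B>" "x \<in> b" "b \<subseteq> V" using B(3) by blast
      have "cspan b" using V(3) b(3) unfolding cspan_def by blast
      then have "b \<in> B'" unfolding B'_def using b by auto
      then have "x \<in> lin_span smul (Cb b)" using Cb b by auto
      then show ?thesis using span_mono[OF lm, of "Cb b" D] \<open>b \<in> B'\<close> unfolding D_def by auto
    qed
  qed
  then show ?thesis unfolding cspan_def using cD by blast
qed

lemma X_nonempty: "X \<noteq> {}"
proof
  assume "X = {}"
  then have "cspan UNIV" using cspan_lemma[of UNIV "{}"] by auto
  then show False unfolding cspan_def using countable_span_not_univ[OF lm dim] by auto
qed

lemma X_open_meet:
  assumes "openin mtopology U" "U \<inter> X \<noteq> {}" "countable C"
  shows "\<not> U \<inter> X \<subseteq> lin_span smul C"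
proof
  assume "U \<inter> X \<subseteq> lin_span smul C"
  then have "cspan U" using cspan_lemma assms by blast
  moreover obtain x where "x \<in> U" "x \<in> X" using assms by auto
  ultimately show False using assms(1) unfolding X_def by auto
qed

lemma choose_indep:
  assumes "\<forall>j<k. openin mtopology (U j) \<and> U j \<inter> X \<noteq> {}"
  shows "\<exists>q. (\<forall>j<k. q j \<in> U j \<inter> X) \<and> indepF smul k q \<and> (\<forall>i<k. \<forall>j<k. i \<noteq> j \<longrightarrow> q i \<noteq> q j)"
  using assms
proof (induction k)
  case 0
  then show ?case by (auto simp: indepF_def)
next
  case (Suc k)
  then obtain q where q: "\<forall>j<k. q j \<in> U j \<inter> X" "indepF smul k q" "\<forall>i<k. \<forall>j<k. i \<noteq> j \<longrightarrow> q i \<noteq> q j"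
    by auto
  have "\<not> U k \<inter> X \<subseteq> lin_span smul (q ` {..<k})"
    using Suc.prems by (intro X_open_meet) (auto intro: countable_finite)
  then obtain z where z: "z \<in> U k \<inter> X" "z \<notin> lin_span smul (q ` {..<k})" by blast
  define q' where "q' = q(k := z)"
  have im: "q' ` {..<k} = q ` {..<k}" unfolding q'_def by auto
  have "indepF smul k q'" unfolding indepF_def
  proof (rule allI, rule impI)
    fix c assume h: "(\<Sum>j<k. smul (c j) (q' j)) = 0"
    have "(\<Sum>j<k. smul (c j) (q' j)) = (\<Sum>j<k. smul (c j) (q j))"
      by (rule sum.cong) (auto simp: q'_def)
    then show "\<forall>j<k. c j = 0" using q(2) h unfolding indepF_def by auto
  qed
  then have "indepF smul (Suc k) q'"
    by (rule indepF_Suc[OF lm]) (use z im in \<open>simp add: q'_def\<close>)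
  moreover have "\<forall>j<Suc k. q' j \<in> U j \<inter> X" using q z by (auto simp: q'_def less_Suc_eq)
  moreover have "\<forall>i<Suc k. \<forall>j<Suc k. i \<noteq> j \<longrightarrow> q' i \<noteq> q' j"
  proof -
    have "q j \<noteq> z" if "j < k" for j
      using z(2) span_base[OF lm, of "q j" "q ` {..<k}"] that by auto
    then show ?thesis using q(3) by (auto simp: q'_def less_Suc_eq)
  qed
  ultimately show ?case by blast
qed

end



context pm
begin

definition Kset :: "nat \<Rightarrow> nat \<Rightarrow> (nat \<Rightarrow> 'r) set" where
  "Kset m N = {c. (\<forall>j<N. nr (c j) \<le> real m) \<and> (\<exists>j<N. 1 / real m \<le> nr (c j) \<and> c j \<noteq> 0)}"

lemma Kset_0: "Kset 0 N = {}"
proof -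
  have "c j = 0" if "nr (c j) \<le> 0" for c :: "nat \<Rightarrow> 'r" and j
    using that nr_nonneg[of "c j"] nr_eq0 by force
  then show ?thesis unfolding Kset_def by force
qed

lemma open_indep:
  assumes ind: "indepF smul N q"
  shows "\<exists>\<epsilon>>0. \<forall>y. (\<forall>j<N. d (y j) (q j) \<le> \<epsilon>) \<longrightarrow>
            (\<forall>c\<in>Kset m N. (\<Sum>j<N. smul (c j) (y j)) \<noteq> 0)"
proof (cases "m = 0")
  case True
  then show ?thesis using Kset_0 by (intro exI[of _ 1]) auto
next
  case False
  then have mpos: "real m > 0" by simp
  define PR where "PR = product_topology (\<lambda>_. R.mtopology) {..<N}"
  define PT where "PT = product_topology (\<lambda>_::nat. mtopology) {..<N}"
  define A where "A = UNIV - R.mball 0 (1 / real m)"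
  define K where "K = (PiE {..<N} (\<lambda>_. R.mcball 0 (real m))) \<inter> (\<Union>j\<in>{..<N}. {c \<in> topspace PR. c j \<in> A})"
  have A_iff: "a \<in> A \<longleftrightarrow> 1 / real m \<le> nr a" for a
    unfolding A_def using nr_neg[of a] by auto
  have cA: "closedin R.mtopology A" unfolding A_def by auto
  have cU: "closedin PR (\<Union>j\<in>{..<N}. {c \<in> topspace PR. c j \<in> A})"
  proof (rule closedin_Union)
    show "finite ((\<lambda>j. {c \<in> topspace PR. c j \<in> A}) ` {..<N})" by simp
  next
    fix S assume "S \<in> (\<lambda>j. {c \<in> topspace PR. c j \<in> A}) ` {..<N}"
    then obtain j where j: "j < N" "S = {c \<in> topspace PR. c j \<in> A}" by auto
    show "closedin PR S" unfolding j(2) PR_def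
      by (rule closedin_continuous_map_preimage[OF continuous_map_product_projection[where k=j and I="{..<N}" and X="\<lambda>_. R.mtopology"] cA]) (use j in simp)
  qed
  have cP: "compactin PR (PiE {..<N} (\<lambda>_. R.mcball 0 (real m)))"
    unfolding PR_def compactin_PiE using Rball_compact by auto
  have compK: "compactin PR K"
    unfolding K_def by (subst Int_commute) (rule closed_Int_compactin[OF cU cP])
  have Kmem: "restrict c {..<N} \<in> K" if "c \<in> Kset m N" for c
  proof -
    from that obtain j where j: "j < N" "1 / real m \<le> nr (c j)" unfolding Kset_def by auto
    have "restrict c {..<N} \<in> PiE {..<N} (\<lambda>_. R.mcball 0 (real m))"
      using that nr_neg unfolding Kset_def by auto
    moreover have "restrict c {..<N} \<in> topspace PR" unfolding PR_def by auto
    moreover have "restrict c {..<N} j \<in> A" using j A_iff by simp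
    ultimately show ?thesis unfolding K_def using j(1) by blast
  qed
  have Knz: "\<exists>j<N. c j \<noteq> 0" if "c \<in> K" for c
  proof -
    from that obtain j where "j < N" "c j \<in> A" unfolding K_def by auto
    then have "1 / real m \<le> nr (c j)" using A_iff by auto
    then have "c j \<noteq> 0" using nr0 mpos by auto
    then show ?thesis using \<open>j < N\<close> by blast
  qed
  define Y where "Y = prod_topology PT (subtopology PR K)"
  define \<Phi> where "\<Phi> z = (\<Sum>j<N. smul (snd z j) (fst z j))" for z :: "(nat \<Rightarrow> 'm) \<times> (nat \<Rightarrow> 'r)"
  have contPhi: "continuous_map Y mtopology \<Phi>"
    unfolding \<Phi>_def
  proof (rule cont_sum[OF add_cont])
    show "topspace mtopology = UNIV" by simp
    show "finite {..<N}" by simp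
    show "\<forall>j\<in>{..<N}. continuous_map Y mtopology (\<lambda>z. smul (snd z j) (fst z j))"
    proof
      fix j assume j: "j \<in> {..<N}"
      have c1: "continuous_map Y R.mtopology (\<lambda>z. snd z j)"
      proof -
        have "continuous_map Y R.mtopology ((\<lambda>c. c j) \<circ> snd)" unfolding Y_def PR_def
          by (rule continuous_map_compose[OF continuous_map_snd continuous_map_from_subtopology[OF continuous_map_product_projection[OF j]]])
        then show ?thesis by (simp add: o_def)
      qed
      have c2: "continuous_map Y mtopology (\<lambda>z. fst z j)"
      proof -
        have "continuous_map Y mtopology ((\<lambda>c. c j) \<circ> fst)" unfolding Y_def PT_def
          by (rule continuous_map_compose[OF continuous_map_fst continuous_map_product_projection[OF j]])
        then show ?thesis by (simp add: o_def)
      qed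
      have "continuous_map Y mtopology ((\<lambda>(r,x). smul r x) \<circ> (\<lambda>z. (snd z j, fst z j)))"
        by (rule continuous_map_compose[OF continuous_map_pairedI[OF c1 c2] smul_cont])
      then show "continuous_map Y mtopology (\<lambda>z. smul (snd z j) (fst z j))" by (simp add: o_def)
    qed
  qed
  define Z where "Z = {z \<in> topspace Y. \<Phi> z \<in> {0}}"
  have cZ: "closedin Y Z" unfolding Z_def
    by (rule closedin_continuous_map_preimage[OF contPhi closedin_Hausdorff_singleton[OF Hausdorff_space_mtopology]]) simp
  have "compact_space (subtopology PR K)" using compK by (rule compact_space_subtopology)
  then have "closed_map Y PT fst" unfolding Y_def by (rule closed_map_fst)
  then have cfZ: "closedin PT (fst ` Z)" using cZ unfolding closed_map_def by blast
  define q' where "q' = restrict q {..<N}"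
  have q'top: "q' \<in> topspace PT" unfolding PT_def q'_def by auto
  have q'nZ: "q' \<notin> fst ` Z"
  proof
    assume "q' \<in> fst ` Z"
    then obtain c where cZ': "(q', c) \<in> Z" by force
    then have cK: "c \<in> K" unfolding Z_def Y_def by auto
    have "\<Phi> (q', c) = 0" using cZ' unfolding Z_def by auto
    then have "(\<Sum>j<N. smul (c j) (q j)) = 0" unfolding \<Phi>_def q'_def by simp
    then have "\<forall>j<N. c j = 0" using ind unfolding indepF_def by blast
    then show False using Knz[OF cK] by blast
  qed
  have "openin PT (topspace PT - fst ` Z)" using cfZ by (rule openin_diff[OF openin_topspace])
  then obtain U where U: "finite {i \<in> {..<N}. U i \<noteq> topspace mtopology}"
    "\<forall>i\<in>{..<N}. openin mtopology (U i)" "q' \<in> PiE {..<N} U" "PiE {..<N} U \<subseteq> topspace PT - fst ` Z"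
    using q'top q'nZ unfolding PT_def openin_product_topology_alt by blast
  have "\<forall>j\<in>{..<N}. \<exists>r>0. mball (q j) r \<subseteq> U j"
  proof
    fix j assume j: "j \<in> {..<N}"
    have "q j \<in> U j" using U(3) j unfolding q'_def by auto
    then show "\<exists>r>0. mball (q j) r \<subseteq> U j" using U(2) j unfolding openin_mtopology by blast
  qed
  then obtain rr where rr: "\<forall>j\<in>{..<N}. rr j > 0 \<and> mball (q j) (rr j) \<subseteq> U j" by metis
  define \<epsilon> where "\<epsilon> = (if N = 0 then 1 else Min (rr ` {..<N}) / 2)"
  have epos: "\<epsilon> > 0"
  proof (cases "N = 0")
    case False
    then have "Min (rr ` {..<N}) > 0" using rr by (subst Min_gr_iff) auto
    then show ?thesis unfolding \<epsilon>_def by simp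
  qed (simp add: \<epsilon>_def)
  have elt: "\<epsilon> < rr j" if "j < N" for j
  proof -
    have m1: "Min (rr ` {..<N}) \<le> rr j" using that by (intro Min_le) auto
    have m2: "Min (rr ` {..<N}) > 0" using rr that by (subst Min_gr_iff) auto
    have "\<epsilon> = Min (rr ` {..<N}) / 2" unfolding \<epsilon>_def using that by auto
    then show ?thesis using m1 m2 by linarith
  qed
  show ?thesis
  proof (intro exI[of _ \<epsilon>] conjI epos allI impI ballI)
    fix y c assume y: "\<forall>j<N. d (y j) (q j) \<le> \<epsilon>" and c: "c \<in> Kset m N"
    show "(\<Sum>j<N. smul (c j) (y j)) \<noteq> 0"
    proof
      assume s0: "(\<Sum>j<N. smul (c j) (y j)) = 0"
      define y' where "y' = restrict y {..<N}"
      have "y' \<in> PiE {..<N} U"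
      proof -
        have "y j \<in> U j" if "j < N" for j
        proof -
          have "d (q j) (y j) < rr j" using y that elt[OF that] commute by fastforce
          then have "y j \<in> mball (q j) (rr j)" by simp
          then show ?thesis using rr that by blast
        qed
        then show ?thesis unfolding y'_def by auto
      qed
      then have y'n: "y' \<notin> fst ` Z" using U(4) by auto
      have "(y', restrict c {..<N}) \<in> Z"
        unfolding Z_def Y_def \<Phi>_def
        using Kmem[OF c] s0 by (auto simp: y'_def PT_def PR_def K_def)
      then show False using y'n by force
    qed
  qed
qed

end



context pm
begin

definition Inv :: "nat \<Rightarrow> (nat \<Rightarrow> 'm) \<times> (nat \<Rightarrow> real) \<Rightarrow> bool" where
  "Inv n s \<longleftrightarrow> (\<forall>j<2^n. fst s j \<in> X \<and> 0 < snd s j \<and> snd s j \<le> (1/2)^n) \<and>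
     (\<forall>i<2^n. \<forall>j<2^n. i \<noteq> j \<longrightarrow> mcball (fst s i) (snd s i) \<inter> mcball (fst s j) (snd s j) = {}) \<and>
     (\<forall>y. \<forall>c\<in>Kset n (2^n). (\<forall>j<2^n. y j \<in> mcball (fst s j) (snd s j)) \<longrightarrow> (\<Sum>j<2^n. smul (c j) (y j)) \<noteq> 0)"

definition Nest :: "nat \<Rightarrow> (nat \<Rightarrow> 'm) \<times> (nat \<Rightarrow> real) \<Rightarrow> (nat \<Rightarrow> 'm) \<times> (nat \<Rightarrow> real) \<Rightarrow> bool" where
  "Nest n s s' \<longleftrightarrow> (\<forall>j<2^Suc n. mcball (fst s' j) (snd s' j) \<subseteq> mcball (fst s (j div 2)) (snd s (j div 2)))"

lemma step:
  assumes inv: "Inv n s"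
  shows "\<exists>s'. Inv (Suc n) s' \<and> Nest n s s'"
proof -
  obtain p r where s: "s = (p, r)" by (cases s)
  have inv1: "\<forall>j<2^n. p j \<in> X \<and> 0 < r j \<and> r j \<le> (1/2)^n" using inv unfolding Inv_def s by simp
  define N' :: nat where "N' = 2^Suc n"
  have jdiv: "j div 2 < 2^n" if "j < N'" for j using that unfolding N'_def by auto
  define U where "U j = mball (p (j div 2)) (r (j div 2) / 2)" for j
  have "\<forall>j<N'. openin mtopology (U j) \<and> U j \<inter> X \<noteq> {}"
  proof (intro allI impI conjI)
    fix j :: nat assume j: "j < N'"
    show "openin mtopology (U j)" unfolding U_def by simp
    have "p (j div 2) \<in> U j" using inv1 jdiv[OF j] unfolding U_def by simp
    then show "U j \<inter> X \<noteq> {}" using inv1 jdiv[OF j] by blast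
  qed
  then obtain q where q: "\<forall>j<N'. q j \<in> U j \<inter> X" "indepF smul N' q" "\<forall>i<N'. \<forall>j<N'. i \<noteq> j \<longrightarrow> q i \<noteq> q j"
    using choose_indep by blast
  obtain \<epsilon> where e: "\<epsilon> > 0" "\<forall>y. (\<forall>j<N'. d (y j) (q j) \<le> \<epsilon>) \<longrightarrow> (\<forall>c\<in>Kset (Suc n) N'. (\<Sum>j<N'. smul (c j) (y j)) \<noteq> 0)"
    using open_indep[OF q(2)] by blast
  define D where "D = (\<lambda>(i,j). d (q i) (q j)) ` {(i,j). i < N' \<and> j < N' \<and> i \<noteq> j}"
  have finD: "finite D" unfolding D_def
    by (rule finite_imageI, rule finite_subset[of _ "{..<N'} \<times> {..<N'}"]) auto
  have N'2: "1 < N'" unfolding N'_def power_Suc using one_le_power[of "2::nat" n] by linarith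
  have "(0,1) \<in> {(i,j). i < N' \<and> j < N' \<and> i \<noteq> j}" using N'2 by auto
  then have neD: "D \<noteq> {}" unfolding D_def by blast
  have posD: "\<forall>x\<in>D. 0 < x" unfolding D_def using q(3) by auto
  define \<delta> where "\<delta> = Min D"
  have dpos: "\<delta> > 0" unfolding \<delta>_def using finD neD posD by (subst Min_gr_iff) auto
  have dle: "\<delta> \<le> d (q i) (q j)" if "i < N'" "j < N'" "i \<noteq> j" for i j
  proof -
    have "d (q i) (q j) \<in> D" unfolding D_def using that by force
    then show ?thesis unfolding \<delta>_def using finD by simp
  qed
  define r' where "r' j = min \<epsilon> (min (r (j div 2) / 2) (min ((1/2)^Suc n) (\<delta>/3)))" for j
  have r'pos: "0 < r' j" if "j < N'" for j
    unfolding r'_def using e(1) dpos inv1 jdiv[OF that] by auto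
  have r'le: "r' j \<le> \<epsilon>" "r' j \<le> r (j div 2) / 2" "r' j \<le> (1/2)^Suc n" "r' j \<le> \<delta>/3" for j
    unfolding r'_def by auto
  have I1: "\<forall>j<2^Suc n. fst (q, r') j \<in> X \<and> 0 < snd (q, r') j \<and> snd (q, r') j \<le> (1/2)^Suc n"
    using q(1) r'pos r'le(3) unfolding N'_def by auto
  have I2: "\<forall>i<2^Suc n. \<forall>j<2^Suc n. i \<noteq> j \<longrightarrow>
      mcball (fst (q, r') i) (snd (q, r') i) \<inter> mcball (fst (q, r') j) (snd (q, r') j) = {}"
  proof (intro allI impI)
    fix i j :: nat assume ij: "i < 2^Suc n" "j < 2^Suc n" "i \<noteq> j"
    show "mcball (fst (q, r') i) (snd (q, r') i) \<inter> mcball (fst (q, r') j) (snd (q, r') j) = {}"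
    proof (rule ccontr)
      assume "mcball (fst (q, r') i) (snd (q, r') i) \<inter> mcball (fst (q, r') j) (snd (q, r') j) \<noteq> {}"
      then obtain x where x: "d (q i) x \<le> r' i" "d (q j) x \<le> r' j" by auto
      have "d (q i) (q j) \<le> d (q i) x + d x (q j)" by (rule triangle) auto
      also have "\<dots> \<le> \<delta>/3 + \<delta>/3" using x r'le(4)[of i] r'le(4)[of j] commute[of x "q j"] by linarith
      finally have "d (q i) (q j) < \<delta>" using dpos by linarith
      then show False using dle[of i j] ij unfolding N'_def by linarith
    qed
  qed
  have I3: "\<forall>y. \<forall>c\<in>Kset (Suc n) (2^Suc n). (\<forall>j<2^Suc n. y j \<in> mcball (fst (q, r') j) (snd (q, r') j)) \<longrightarrow>
      (\<Sum>j<2^Suc n. smul (c j) (y j)) \<noteq> 0"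
  proof (intro allI ballI impI)
    fix y c assume c: "c \<in> Kset (Suc n) (2^Suc n)" and y: "\<forall>j<2^Suc n. y j \<in> mcball (fst (q, r') j) (snd (q, r') j)"
    have "\<forall>j<N'. d (y j) (q j) \<le> \<epsilon>"
    proof (intro allI impI)
      fix j :: nat assume "j < N'"
      then have "d (q j) (y j) \<le> r' j" using y unfolding N'_def by auto
      then show "d (y j) (q j) \<le> \<epsilon>" using r'le(1)[of j] commute[of "y j" "q j"] by linarith
    qed
    then show "(\<Sum>j<2^Suc n. smul (c j) (y j)) \<noteq> 0" using e(2) c unfolding N'_def by blast
  qed
  have "Inv (Suc n) (q, r')" unfolding Inv_def using I1 I2 I3 by blast
  moreover have "Nest n s (q, r')" unfolding Nest_def s
  proof (intro allI impI subsetI)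
    fix j :: nat and x assume j: "j < 2^Suc n" and x: "x \<in> mcball (fst (q, r') j) (snd (q, r') j)"
    have "q j \<in> U j" using q(1) j unfolding N'_def by auto
    then have "d (p (j div 2)) (q j) < r (j div 2) / 2" unfolding U_def by simp
    moreover have "d (q j) x \<le> r (j div 2) / 2" using x r'le(2)[of j] by auto
    moreover have "d (p (j div 2)) x \<le> d (p (j div 2)) (q j) + d (q j) x" by (rule triangle) auto
    ultimately show "x \<in> mcball (fst (p, r) (j div 2)) (snd (p, r) (j div 2))" by simp
  qed
  ultimately show ?thesis by blast
qed

definition st :: "nat \<Rightarrow> (nat \<Rightarrow> 'm) \<times> (nat \<Rightarrow> real)" where
  "st = rec_nat (\<lambda>_. SOME x. x \<in> X, \<lambda>_. 1) (\<lambda>n s. SOME s'. Inv (Suc n) s' \<and> Nest n s s')"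

lemma st_0: "st 0 = (\<lambda>_. SOME x. x \<in> X, \<lambda>_. 1)" unfolding st_def by simp
lemma st_Suc: "st (Suc n) = (SOME s'. Inv (Suc n) s' \<and> Nest n (st n) s')" unfolding st_def by simp

lemma st_Inv: "Inv n (st n)"
proof (induction n)
  case 0
  have x0: "(SOME x. x \<in> X) \<in> X" using X_nonempty by (simp add: some_in_eq)
  have "Kset 0 (2^0) = {}" by (rule Kset_0)
  then show ?case unfolding Inv_def st_0 using x0 by auto
next
  case (Suc n)
  then show ?case unfolding st_Suc using someI_ex[OF step[OF Suc]] by blast
qed

lemma st_Nest: "Nest n (st n) (st (Suc n))"
  unfolding st_Suc using someI_ex[OF step[OF st_Inv[of n]]] by blast

definition pp where "pp n j = fst (st n) j"
definition rr where "rr n j = snd (st n) j"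
definition cell where "cell n j = mcball (pp n j) (rr n j)"

lemma rr_pos: "j < 2^n \<Longrightarrow> 0 < rr n j" and rr_le: "j < 2^n \<Longrightarrow> rr n j \<le> (1/2)^n"
  using st_Inv[of n] unfolding Inv_def rr_def by auto

lemma pp_cell: "j < 2^n \<Longrightarrow> pp n j \<in> cell n j"
  using rr_pos unfolding cell_def by (simp add: less_imp_le)

lemma cell_disj: "i < 2^n \<Longrightarrow> j < 2^n \<Longrightarrow> x \<in> cell n i \<Longrightarrow> x \<in> cell n j \<Longrightarrow> i = j"
  using st_Inv[of n] unfolding Inv_def cell_def pp_def rr_def by blast

lemma cell_R: "(\<forall>j<2^n. y j \<in> cell n j) \<Longrightarrow> c \<in> Kset n (2^n) \<Longrightarrow> (\<Sum>j<2^n. smul (c j) (y j)) \<noteq> 0"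
  using st_Inv[of n] unfolding Inv_def cell_def pp_def rr_def by blast

lemma cell_Suc: "j < 2^Suc n \<Longrightarrow> cell (Suc n) j \<subseteq> cell n (j div 2)"
  using st_Nest[of n] unfolding Nest_def cell_def pp_def rr_def by blast

lemma cell_nest: "j < 2^(n+t) \<Longrightarrow> cell (n+t) j \<subseteq> cell n (j div 2^t)"
proof (induction t arbitrary: j)
  case 0
  then show ?case by simp
next
  case (Suc t)
  have "cell (n + Suc t) j \<subseteq> cell (n+t) (j div 2)" using cell_Suc[of j "n+t"] Suc.prems by simp
  also have "\<dots> \<subseteq> cell n (j div 2 div 2^t)"
    by (rule Suc.IH) (use Suc.prems in \<open>simp add: less_mult_imp_div_less\<close>)
  also have "j div 2 div 2^t = j div 2^Suc t" by (simp add: div_mult2_eq)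
  finally show ?case .
qed

lemma cell_diam: "j < 2^n \<Longrightarrow> x \<in> cell n j \<Longrightarrow> y \<in> cell n j \<Longrightarrow> d x y \<le> 2 * (1/2)^n"
proof -
  assume j: "j < 2^n" and x: "x \<in> cell n j" and y: "y \<in> cell n j"
  have "d x y \<le> d x (pp n j) + d (pp n j) y" by (rule triangle) auto
  moreover have "d (pp n j) x \<le> rr n j" "d (pp n j) y \<le> rr n j" using x y unfolding cell_def by auto
  ultimately show ?thesis using rr_le[OF j] commute[of x "pp n j"] by linarith
qed

definition Pset where "Pset = {x. \<forall>n. \<exists>j<2^n. x \<in> cell n j}"

lemma Pset_closed: "closedin mtopology Pset"
proof -
  have "Pset = \<Inter> (range (\<lambda>n. \<Union> (cell n ` {..<2^n})))" unfolding Pset_def by auto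
  moreover have "closedin mtopology (\<Inter> (range (\<lambda>n. \<Union> (cell n ` {..<2^n}))))"
    by (rule closedin_Inter) (auto intro!: closedin_Union simp: cell_def)
  ultimately show ?thesis by simp
qed

lemma branch:
  assumes j: "j < 2^n"
  shows "\<exists>x\<in>Pset. x \<in> cell n j"
proof -
  define C where "C t = cell (n+t) (j * 2^t)" for t
  have jt: "j * 2^t < 2^(n+t)" for t using j by (simp add: power_add)
  have "(\<forall>t. closedin mtopology (C t)) \<and> (\<forall>t. C t \<noteq> {}) \<and> decseq C \<and> (\<forall>\<epsilon>>0. \<exists>t a. C t \<subseteq> mcball a \<epsilon>)"
  proof (intro conjI)
    show "\<forall>t. closedin mtopology (C t)" unfolding C_def cell_def by simp
    show "\<forall>t. C t \<noteq> {}" unfolding C_def using pp_cell[OF jt] by auto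
    show "decseq C" unfolding decseq_Suc_iff
    proof
      fix t
      have "C (Suc t) = cell (Suc (n+t)) (j * 2^Suc t)" unfolding C_def by simp
      also have "\<dots> \<subseteq> cell (n+t) (j * 2^Suc t div 2)" by (rule cell_Suc) (use jt[of "Suc t"] in simp)
      also have "j * 2^Suc t div 2 = j * 2^t" by simp
      finally show "C (Suc t) \<le> C t" unfolding C_def by simp
    qed
    show "\<forall>\<epsilon>>0. \<exists>t a. C t \<subseteq> mcball a \<epsilon>"
    proof (intro allI impI)
      fix e :: real assume "e > 0"
      then obtain t where t: "(1/2::real)^t < e" using real_arch_pow_inv[of e "1/2"] by auto
      have "rr (n+t) (j*2^t) \<le> (1/2)^(n+t)" by (rule rr_le[OF jt])
      also have "(1/2::real)^(n+t) \<le> (1/2)^t" by (rule power_decreasing) auto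
      finally have "rr (n+t) (j*2^t) \<le> e" using t by linarith
      then have "C t \<subseteq> mcball (pp (n+t) (j*2^t)) e" unfolding C_def cell_def by (rule mcball_subset_concentric)
      then show "\<exists>t a. C t \<subseteq> mcball a e" by blast
    qed
  qed
  then have "\<Inter> (range C) \<noteq> {}" using mcomplete_nest compl by blast
  then obtain x where x: "\<forall>t. x \<in> C t" by auto
  have "x \<in> Pset" unfolding Pset_def
  proof (rule CollectI, rule allI)
    fix l
    show "\<exists>i<2^l. x \<in> cell l i"
    proof (cases "n \<le> l")
      case True
      then have "l = n + (l - n)" by simp
      then show ?thesis using spec[OF x, of "l-n"] jt[of "l-n"] unfolding C_def by metis
    next
      case False
      define t where "t = n - l"
      have nl: "n = l + t" using False unfolding t_def by simp
      have "x \<in> cell n j" using spec[OF x, of 0] unfolding C_def by simp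
      then have "x \<in> cell l (j div 2^t)" using cell_nest[of j l t] j nl by auto
      moreover have "j div 2^t < 2^l" using j nl by (simp add: less_mult_imp_div_less power_add)
      ultimately show ?thesis by blast
    qed
  qed
  moreover have "x \<in> cell n j" using spec[OF x, of 0] unfolding C_def by simp
  ultimately show ?thesis by blast
qed

lemma Pset_nonempty: "Pset \<noteq> {}" using branch[of 0 0] by auto

lemma sib: "(j::nat) < 2 * M \<Longrightarrow> (if even j then j+1 else j-1) < 2 * M \<and> (if even j then j+1 else j-1) \<noteq> j \<and>
   (if even j then j+1 else j-1) div 2 = j div 2"
  by presburger

lemma Pset_perfect: "perfect_set mtopology Pset"
  unfolding perfect_set_def
proof (intro conjI Pset_closed)
  show "mtopology derived_set_of Pset = Pset"
  proof
    show "mtopology derived_set_of Pset \<subseteq> Pset"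
      using closedin_contains_derived_set[THEN iffD1, OF Pset_closed] by (rule conjunct1)
    show "Pset \<subseteq> mtopology derived_set_of Pset"
    proof
      fix x assume xP: "x \<in> Pset"
      have "\<exists>y\<in>Pset. y \<noteq> x \<and> y \<in> mball x r" if r: "r > 0" for r
      proof -
        obtain n where n: "(1/2::real)^n < r/2" using real_arch_pow_inv[of "r/2" "1/2"] r by auto
        obtain j where j: "j < 2^Suc n" "x \<in> cell (Suc n) j" using xP unfolding Pset_def by blast
        define j' where "j' = (if even j then j+1 else j-1)"
        have j': "j' < 2^Suc n" "j' \<noteq> j" "j' div 2 = j div 2"
          using sib[of j "2^n"] j(1) unfolding j'_def by auto
        obtain y where y: "y \<in> Pset" "y \<in> cell (Suc n) j'" using branch[OF j'(1)] by blast
        have "y \<noteq> x" using cell_disj[OF j(1) j'(1)] j(2) y(2) j'(2) by auto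
        moreover have "x \<in> cell n (j div 2)" using cell_Suc[OF j(1)] j(2) by auto
        moreover have "y \<in> cell n (j div 2)" using cell_Suc[OF j'(1)] y(2) j'(3) by auto
        moreover have "j div 2 < 2^n" using j(1) by auto
        ultimately have "d x y \<le> 2 * (1/2)^n" "y \<noteq> x" using cell_diam by auto
        then have "y \<in> mball x r" using n by simp
        then show ?thesis using y(1) \<open>y \<noteq> x\<close> by blast
      qed
      then show "x \<in> mtopology derived_set_of Pset" unfolding metric_derived_set_of by auto
    qed
  qed
qed

definition idx where "idx n x = (SOME j. j < 2^n \<and> x \<in> cell n j)"

lemma idx: "x \<in> Pset \<Longrightarrow> idx n x < 2^n \<and> x \<in> cell n (idx n x)"
  unfolding idx_def Pset_def by (rule someI_ex) blast

lemma idx_sep: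
  assumes "x \<in> Pset" "x' \<in> Pset" "x \<noteq> x'"
  shows "\<forall>\<^sub>F n in sequentially. idx n x \<noteq> idx n x'"
proof -
  have "d x x' > 0" using assms by simp
  then obtain n0 where n0: "(1/2::real)^n0 < d x x' / 2" using real_arch_pow_inv[of "d x x' / 2" "1/2"] by auto
  have "idx n x \<noteq> idx n x'" if "n \<ge> n0" for n
  proof
    assume eq: "idx n x = idx n x'"
    have "d x x' \<le> 2 * (1/2)^n" using cell_diam[of "idx n x" n x x'] idx[OF assms(1), of n] idx[OF assms(2), of n] eq by auto
    moreover have "(1/2::real)^n \<le> (1/2)^n0" using that by (intro power_decreasing) auto
    ultimately show False using n0 by linarith
  qed
  then show ?thesis unfolding eventually_sequentially by blast
qed

lemma Pset_indep: "lin_indep smul Pset"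
  unfolding lin_indep_def
proof (intro allI impI)
  fix S c assume h: "finite S \<and> S \<subseteq> Pset \<and> (\<Sum>x\<in>S. smul (c x) x) = 0"
  then have S: "finite S" "S \<subseteq> Pset" "(\<Sum>x\<in>S. smul (c x) x) = 0" by auto
  show "\<forall>x\<in>S. c x = 0"
  proof (rule ccontr)
    assume "\<not> (\<forall>x\<in>S. c x = 0)"
    then obtain x0 where x0: "x0 \<in> S" "c x0 \<noteq> 0" by blast
    have nx0: "nr (c x0) > 0" using x0(2) nr_nonneg[of "c x0"] nr_eq0[of "c x0"] by fastforce
    define B where "B = Max (insert 1 ((\<lambda>x. nr (c x)) ` S)) + 1 / nr (c x0)"
    define m where "m = nat \<lceil>B\<rceil>"
    have m: "B \<le> real m" unfolding m_def by (rule real_nat_ceiling_ge)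
    have Mx: "nr (c x) \<le> Max (insert 1 ((\<lambda>x. nr (c x)) ` S))" if "x \<in> S" for x
      using S(1) that by (intro Max_ge) auto
    have M1: "1 \<le> Max (insert 1 ((\<lambda>x. nr (c x)) ` S))" using S(1) by (intro Max_ge) auto
    have mx: "nr (c x) \<le> real m" if "x \<in> S" for x using Mx[OF that] m nx0 unfolding B_def
      by (smt (verit) divide_pos_pos)
    have m1: "1 \<le> real m" using M1 m nx0 unfolding B_def by (smt (verit) divide_pos_pos)
    have "1 / nr (c x0) \<le> real m" using M1 m nx0 unfolding B_def by linarith
    then have mx0: "1 / real m \<le> nr (c x0)" using nx0 m1
      by (simp add: divide_le_eq mult.commute)
    have "\<forall>\<^sub>F n in sequentially. m \<le> n \<and> (\<forall>x\<in>S. \<forall>x'\<in>S. x \<noteq> x' \<longrightarrow> idx n x \<noteq> idx n x')"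
    proof (rule eventually_conj)
      show "\<forall>\<^sub>F n in sequentially. m \<le> n" by (rule eventually_ge_at_top)
      show "\<forall>\<^sub>F n in sequentially. \<forall>x\<in>S. \<forall>x'\<in>S. x \<noteq> x' \<longrightarrow> idx n x \<noteq> idx n x'"
        using S by (intro eventually_ball_finite ballI) (auto intro!: eventually_ball_finite idx_sep simp: eventually_mono)
    qed
    then obtain n where n: "m \<le> n" "\<forall>x\<in>S. \<forall>x'\<in>S. x \<noteq> x' \<longrightarrow> idx n x \<noteq> idx n x'"
      unfolding eventually_sequentially by blast
    define I where "I = idx n"
    have inj: "inj_on I S" unfolding inj_on_def I_def using n(2) by blast
    have IS: "I ` S \<subseteq> {..<2^n}" unfolding I_def using idx S(2) by auto
    define inv where "inv = inv_into S I"
    define y where "y j = (if j \<in> I ` S then inv j else pp n j)" for j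
    define c' where "c' j = (if j \<in> I ` S then c (inv j) else 0)" for j
    have invS: "inv j \<in> S" "I (inv j) = j" if "j \<in> I ` S" for j
      unfolding inv_def using that by (auto simp: inv_into_into f_inv_into_f)
    have yc: "\<forall>j<2^n. y j \<in> cell n j"
    proof (intro allI impI)
      fix j :: nat assume j: "j < 2^n"
      show "y j \<in> cell n j"
      proof (cases "j \<in> I ` S")
        case True
        then have "inv j \<in> Pset" using invS S(2) by auto
        then have "inv j \<in> cell n (I (inv j))" using idx unfolding I_def by blast
        then show ?thesis using True invS unfolding y_def by simp
      qed (simp add: y_def pp_cell j)
    qed
    have "(\<Sum>j<2^n. smul (c' j) (y j)) = (\<Sum>j<2^n. if j \<in> I ` S then smul (c (inv j)) (inv j) else 0)"
      by (rule sum.cong) (auto simp: c'_def y_def sm_zero_left[OF lm])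
    also have "\<dots> = (\<Sum>j\<in>{..<2^n} \<inter> I ` S. smul (c (inv j)) (inv j))"
      by (simp add: sum.inter_restrict)
    also have "{..<2^n} \<inter> I ` S = I ` S" using IS by auto
    also have "(\<Sum>j\<in>I ` S. smul (c (inv j)) (inv j)) = (\<Sum>x\<in>S. smul (c (inv (I x))) (inv (I x)))"
      by (simp add: sum.reindex[OF inj] o_def)
    also have "\<dots> = (\<Sum>x\<in>S. smul (c x) x)"
      by (rule sum.cong) (auto simp: inv_def inv_into_f_f[OF inj])
    also have "\<dots> = 0" by (rule S(3))
    finally have sum0: "(\<Sum>j<2^n. smul (c' j) (y j)) = 0" .
    have "c' \<in> Kset n (2^n)"
      unfolding Kset_def
    proof (intro CollectI conjI allI impI)
      fix j :: nat assume j: "j < 2^n"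
      show "nr (c' j) \<le> real n"
      proof (cases "j \<in> I ` S")
        case True
        then show ?thesis unfolding c'_def using mx[OF invS(1)[OF True]] n(1) by simp
      qed (simp add: c'_def nr0)
    next
      have x0I: "I x0 \<in> I ` S" using x0 by auto
      have "c' (I x0) = c x0" unfolding c'_def inv_def using x0 inv_into_f_f[OF inj] by auto
      moreover have "1 / real n \<le> 1 / real m" using m1 n(1) by (simp add: frac_le)
      moreover have "I x0 < 2^n" using IS x0I by auto
      ultimately show "\<exists>j<2^n. 1 / real n \<le> nr (c' j) \<and> c' j \<noteq> 0"
        using mx0 x0(2) by (intro exI[of _ "I x0"]) auto
    qed
    then show False using cell_R[OF yc] sum0 by blast
  qed
qed

lemma main: "\<exists>P. P \<noteq> {} \<and> perfect_set mtopology P \<and> lin_indep smul P"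
  using Pset_nonempty Pset_perfect Pset_indep by blast

end

theorem corollary5p2:
  fixes nr :: "'r::division_ring \<Rightarrow> real"
    and smul :: "'r \<Rightarrow> 'm::ab_group_add \<Rightarrow> 'm"
    and T :: "'m topology"
  assumes "proper_ring_norm nr"
    and "topological_left_module nr smul T"
    and "Polish_space T"
    and "uncountable_dim smul"
  shows "\<exists>P. P \<noteq> {} \<and> perfect_set T P \<and> lin_indep smul P"
proof -
  have cm: "completely_metrizable_space T" using assms(3) unfolding Polish_space_def by auto
  obtain M d where Md: "Metric_space M d" "Metric_space.mcomplete M d" "T = Metric_space.mtopology M d"
    using cm unfolding completely_metrizable_space_def by blast
  have top: "topspace T = UNIV" using assms(2) unfolding topological_left_module_def by auto
  have "M = UNIV" using top Md Metric_space.topspace_mtopology by metis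
  with Md have Md': "Metric_space UNIV d" "Metric_space.mcomplete UNIV d" "T = Metric_space.mtopology UNIV d"
    by auto
  have sep: "separable_space T" using assms(3) unfolding Polish_space_def by auto
  have pm: "pm d nr smul" unfolding pm_def pm_axioms_def
    using Md'(1,2) assms(1,4) assms(2)[unfolded Md'(3)] sep[unfolded Md'(3)] by blast
  show ?thesis using pm.main[OF pm] Md'(3) by simp
qed

end
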